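(* Let $d=\infty$, $C>0$, and let ${\boldsymbol\gamma}$ be POD weights with parameters $a,p$ such that $\Gamma_1>0$, $p>a$ and $\sum_{j\in\mathbb N}\gamma_j<\infty$. Then ${\boldsymbol\gamma}\in\mathcal S_{\infty,C}$ and $$\mathrm{decay}(T^\uparrow_{\infty,C}{\boldsymbol\gamma})=\mathrm{decay}({\boldsymbol\gamma})=p.$$
   Context: $\mathcal U_\infty$ is the set of finite subsets of $\mathbb N$; weights are families $(\gamma_u)_{u\in\mathcal U_\infty}$ of non-negative reals. For a family $(a_v)_{v\in V}$ of non-negative reals indexed by a countably infinite set $V$, $\mathrm{decay}((a_v))=\sup\{\tau>0:\sum_{v\in V}a_v^{1/\tau}<\infty\}$ with $\sup\emptyset=0$. POD weights: $\gamma_u=\Gamma_{|u|}\prod_{j\in u}\gamma_j$ for a non-increasing sequence $(\gamma_j)_{j\in\mathbb N}$ of non-negative reals and non-negative $(\Gamma_k)_{k\ge0}$ with $\Gamma_k\le C_a(k!)^a$ for all $k$, some $a,C_a>0$; $p=\mathrm{decay}((\gamma_j)_{j\in\mathbb N})$. For $C>0$: $\mathcal S_{\infty,C}=\{{\boldsymbol\gamma}:\sum_vC^{2|v|}\gamma_v<\infty\}$ and $(T^\uparrow_{\infty,C}{\boldsymbol\gamma})_u=\sum_{v\in\mathcal U_\infty,\,v\supseteq u}C^{2|v|}\gamma_v$. *)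

theory Defs
  imports "HOL-Analysis.Analysis"
begin

definition U_inf :: "nat set set" where
  "U_inf = {u. finite u}"

text \<open>decay of a non-negative family indexed by V (extended real, since it may be infinite);
  sup of the empty set is taken to be 0.\<close>
definition decay :: "'a set \<Rightarrow> ('a \<Rightarrow> real) \<Rightarrow> ereal" where
  "decay V a = Sup (insert 0 {ereal \<tau> | \<tau>. \<tau> > 0 \<and> (\<lambda>v. a v powr (1 / \<tau>)) summable_on V})"

definition pod_weights :: "(nat \<Rightarrow> real) \<Rightarrow> (nat \<Rightarrow> real) \<Rightarrow> nat set \<Rightarrow> real" where
  "pod_weights Gam g u = Gam (card u) * (\<Prod>j\<in>u. g j)"

definition S_inf :: "real \<Rightarrow> (nat set \<Rightarrow> real) set" where
  "S_inf C = {w. (\<lambda>v. C ^ (2 * card v) * w v) summable_on U_inf}"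

definition T_up :: "real \<Rightarrow> (nat set \<Rightarrow> real) \<Rightarrow> nat set \<Rightarrow> real" where
  "T_up C w u = (\<Sum>\<^sub>\<infinity>v\<in>{v\<in>U_inf. u \<subseteq> v}. C ^ (2 * card v) * w v)"

end

theory Submission
  imports Defs "HOL-Real_Asymp.Real_Asymp"
begin


lemma bern_aux:
  fixes s c :: real assumes "s \<ge> 0" "c \<ge> 0"
  shows "s ^ Suc m + real (Suc m) * c * s ^ m \<le> (s + c) ^ Suc m"
proof (induction m)
  case 0 then show ?case by simp
next
  case (Suc m)
  have "s ^ Suc (Suc m) + real (Suc (Suc m)) * c * s ^ Suc m
      \<le> (s + c) * (s ^ Suc m + real (Suc m) * c * s ^ m)"
    using assms by (simp add: algebra_simps)
  also have "\<dots> \<le> (s + c) * (s + c) ^ Suc m"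
    using Suc assms by (intro mult_left_mono) auto
  finally show ?case by simp
qed

lemma elem_sym_bound:
  fixes c :: "nat \<Rightarrow> real"
  assumes "finite A" "\<And>j. c j \<ge> 0"
  shows "(\<Sum>u\<in>{u\<in>Pow A. card u = k}. \<Prod>j\<in>u. c j) \<le> (sum c A) ^ k / fact k"
  using assms(1)
proof (induction A arbitrary: k rule: finite_induct)
  case empty
  then show ?case
  proof -
    have "{u\<in>Pow {}. card u = k} = (if k = 0 then {{}} else {})" by auto
    then show ?thesis unfolding \<open>_ = _\<close> by (cases k) auto
  qed
next
  case (insert x A)
  show ?case
  proof (cases k)
    case 0
    have "{u\<in>Pow (insert x A). card u = 0} = {{}}"
      using insert.hyps by (auto, metis card_0_eq finite_insert finite_subset empty_iff)
    then show ?thesis using 0 by simp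
  next
    case (Suc m)
    have split: "{u\<in>Pow (insert x A). card u = Suc m}
        = {u\<in>Pow A. card u = Suc m} \<union> insert x ` {u\<in>Pow A. card u = m}"
      (is "?L = ?R1 \<union> ?R2")
    proof
      show "?L \<subseteq> ?R1 \<union> ?R2"
      proof
        fix u assume u: "u \<in> ?L"
        show "u \<in> ?R1 \<union> ?R2"
        proof (cases "x \<in> u")
          case True
          have "finite u" using u insert.hyps by (auto dest: finite_subset[rotated])
          then have "card (u - {x}) = m" using u True by auto
          moreover have "u = insert x (u - {x})" using True by auto
          ultimately show ?thesis using u by blast
        next
          case False then show ?thesis using u by auto
        qed
      qed
    next
      show "?R1 \<union> ?R2 \<subseteq> ?L"
      proof
        fix u assume "u \<in> ?R1 \<union> ?R2"
        then show "u \<in> ?L"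
        proof
          assume "u \<in> ?R1" then show ?thesis by auto
        next
          assume "u \<in> ?R2"
          then obtain w where w: "w \<subseteq> A" "card w = m" "u = insert x w" by auto
          have "finite w" using w insert.hyps by (auto dest: finite_subset[rotated])
          moreover have "x \<notin> w" using w insert.hyps by auto
          ultimately show ?thesis using w by auto
        qed
      qed
    qed
    have fin1: "finite ?R1" and fin2: "finite {u\<in>Pow A. card u = m}" using insert.hyps by auto
    have disj: "?R1 \<inter> ?R2 = {}" using insert.hyps by auto
    have inj: "inj_on (insert x) {u\<in>Pow A. card u = m}"
    proof (rule inj_onI)
      fix w1 w2 assume "w1 \<in> {u\<in>Pow A. card u = m}" "w2 \<in> {u\<in>Pow A. card u = m}" "insert x w1 = insert x w2"
      moreover have "x \<notin> w1" "x \<notin> w2" using calculation insert.hyps by auto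
      ultimately show "w1 = w2" by (metis Diff_insert_absorb)
    qed
    have "(\<Sum>u\<in>?L. \<Prod>j\<in>u. c j) = (\<Sum>u\<in>?R1. \<Prod>j\<in>u. c j) + (\<Sum>u\<in>?R2. \<Prod>j\<in>u. c j)"
      unfolding split using fin1 fin2 disj by (intro sum.union_disjoint) auto
    also have "(\<Sum>u\<in>?R2. \<Prod>j\<in>u. c j) = (\<Sum>w\<in>{u\<in>Pow A. card u = m}. \<Prod>j\<in>insert x w. c j)"
      using inj by (simp add: sum.reindex)
    also have "\<dots> = c x * (\<Sum>w\<in>{u\<in>Pow A. card u = m}. \<Prod>j\<in>w. c j)"
      unfolding sum_distrib_left
    proof (intro sum.cong refl)
      fix w assume "w \<in> {u\<in>Pow A. card u = m}"
      then have "finite w" "x \<notin> w" using insert.hyps by (auto dest: finite_subset[rotated])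
      then show "(\<Prod>j\<in>insert x w. c j) = c x * (\<Prod>j\<in>w. c j)" by simp
    qed
    also have "(\<Sum>u\<in>?R1. \<Prod>j\<in>u. c j) + c x * (\<Sum>w\<in>{u\<in>Pow A. card u = m}. \<Prod>j\<in>w. c j)
       \<le> (sum c A) ^ Suc m / fact (Suc m) + c x * ((sum c A) ^ m / fact m)"
      using insert.IH[of "Suc m"] insert.IH[of m] assms(2)
      by (intro add_mono mult_left_mono) auto
    also have "\<dots> = ((sum c A) ^ Suc m + real (Suc m) * c x * (sum c A) ^ m) / fact (Suc m)"
    proof -
      have fm: "(fact m::real) > 0" by simp
      have "(fact (Suc m)::real) = real (Suc m) * fact m" by simp
      then show ?thesis using fm by (simp add: field_simps del: fact_Suc of_nat_Suc)
    qed
    also have "\<dots> \<le> (sum c A + c x) ^ Suc m / fact (Suc m)"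
      using assms(2) by (intro divide_right_mono bern_aux sum_nonneg) auto
    also have "sum c A + c x = sum c (insert x A)" using insert.hyps by simp
    finally show ?thesis using Suc by simp
  qed
qed

lemma pow_card_bound:
  fixes c f :: "nat \<Rightarrow> real"
  assumes "finite A" "\<And>j. c j \<ge> 0" "\<And>k. f k \<ge> 0"
  shows "(\<Sum>u\<in>Pow A. f (card u) * (\<Prod>j\<in>u. c j)) \<le> (\<Sum>k\<le>card A. f k * (sum c A) ^ k / fact k)"
proof -
  have "(\<Sum>u\<in>Pow A. f (card u) * (\<Prod>j\<in>u. c j))
      = (\<Sum>k\<le>card A. \<Sum>u | u \<in> Pow A \<and> card u = k. f (card u) * (\<Prod>j\<in>u. c j))"
    using assms(1) by (intro sum.group[symmetric]) (auto intro: card_mono)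
  also have "\<dots> = (\<Sum>k\<le>card A. f k * (\<Sum>u | u \<in> Pow A \<and> card u = k. (\<Prod>j\<in>u. c j)))"
    by (simp add: sum_distrib_left)
  also have "\<dots> \<le> (\<Sum>k\<le>card A. f k * ((sum c A) ^ k / fact k))"
    using elem_sym_bound[OF assms(1,2)] assms(3)
    by (intro sum_mono mult_left_mono) auto
  finally show ?thesis by simp
qed


lemma summable_pod:
  fixes c f :: "nat \<Rightarrow> real"
  assumes "\<And>j. c j \<ge> 0" "\<And>k. f k \<ge> 0" "summable c"
    and "summable (\<lambda>k. f k * (suminf c) ^ k / fact k)"
  shows "(\<lambda>u. f (card u) * (\<Prod>j\<in>u. c j)) summable_on U_inf"
proof (rule nonneg_bdd_above_summable_on)
  show "\<And>x. x \<in> U_inf \<Longrightarrow> 0 \<le> f (card x) * (\<Prod>j\<in>x. c j)"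
    using assms by (simp add: prod_nonneg)
  show "bdd_above (sum (\<lambda>u. f (card u) * (\<Prod>j\<in>u. c j)) ` {F. F \<subseteq> U_inf \<and> finite F})"
  proof (rule bdd_aboveI2)
    fix F assume F: "F \<in> {F. F \<subseteq> U_inf \<and> finite F}"
    let ?A = "\<Union>F"
    have finA: "finite ?A" using F by (auto simp: U_inf_def)
    have "(\<Sum>u\<in>F. f (card u) * (\<Prod>j\<in>u. c j)) \<le> (\<Sum>u\<in>Pow ?A. f (card u) * (\<Prod>j\<in>u. c j))"
      using F finA assms by (intro sum_mono2) (auto simp: prod_nonneg)
    also have "\<dots> \<le> (\<Sum>k\<le>card ?A. f k * (sum c ?A) ^ k / fact k)"
      by (rule pow_card_bound[OF finA assms(1,2)])
    also have "\<dots> \<le> (\<Sum>k\<le>card ?A. f k * (suminf c) ^ k / fact k)"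
      using assms finA
      by (intro sum_mono divide_right_mono mult_left_mono power_mono sum_le_suminf sum_nonneg) auto
    also have "\<dots> \<le> (\<Sum>k. f k * (suminf c) ^ k / fact k)"
      using assms suminf_nonneg[OF assms(3)] by (intro sum_le_suminf) (auto intro!: divide_nonneg_pos mult_nonneg_nonneg)
    finally show "(\<Sum>u\<in>F. f (card u) * (\<Prod>j\<in>u. c j)) \<le> (\<Sum>k. f k * (suminf c) ^ k / fact k)" .
  qed
qed

lemma summable_fact_powr:
  fixes r b :: real assumes "b < 1" "r \<ge> 0"
  shows "summable (\<lambda>k. r ^ k * fact k powr (b - 1))"
proof -
  define e where "e = 1 - b"
  have e: "e > 0" using assms e_def by simp
  have "((\<lambda>k. r * (real (Suc k)) powr (-e)) \<longlongrightarrow> 0) sequentially"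
    using e by real_asymp
  then have "eventually (\<lambda>k. r * (real (Suc k)) powr (-e) < 1/2) sequentially"
    by (rule order_tendstoD) simp
  then obtain N where N: "\<And>k. k \<ge> N \<Longrightarrow> r * (real (Suc k)) powr (-e) < 1/2"
    by (auto simp: eventually_sequentially)
  show ?thesis
  proof (rule summable_ratio_test[of "1/2" N])
    fix k assume k: "k \<ge> N"
    have "fact (Suc k) powr (b - 1) = (real (Suc k)) powr (-e) * fact k powr (-e)"
      unfolding e_def by (simp add: powr_mult[symmetric] del: of_nat_Suc)
    then have "r ^ Suc k * fact (Suc k) powr (b - 1)
        = (r * (real (Suc k)) powr (-e)) * (r ^ k * fact k powr (b - 1))"
      by (simp add: e_def algebra_simps)
    also have "\<dots> \<le> 1/2 * (r ^ k * fact k powr (b - 1))"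
      using N[OF k] assms by (intro mult_right_mono) auto
    finally show "norm (r ^ Suc k * fact (Suc k) powr (b - 1)) \<le> 1/2 * norm (r ^ k * fact k powr (b - 1))"
      using assms by simp
  qed simp
qed

lemma power_powr_pos: "0 < (M::real) \<Longrightarrow> (M ^ k) powr l = (M powr l) ^ k"
  by (simp add: powr_realpow[symmetric] powr_powr powr_power mult.commute)

lemma key:
  fixes g G :: "nat \<Rightarrow> real" and M Ca a \<tau> :: real
  assumes g0: "\<And>j. g j \<ge> 0" and G0: "\<And>k. G k \<ge> 0" and a: "a > 0" and Ca: "Ca > 0"
    and GB: "\<And>k. G k \<le> Ca * fact k powr a" and M: "M > 0" and tau: "\<tau> > a"
    and sg: "(\<lambda>j. g j powr (1/\<tau>)) summable_on UNIV"
  shows "(\<lambda>u. (M ^ card u * pod_weights G g u) powr (1/\<tau>)) summable_on U_inf"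
proof -
  define l where "l = 1/\<tau>"
  have l1: "l > 0" using tau a by (simp add: l_def)
  have "a / \<tau> < 1" using tau a by simp
  then have l2: "a * l < 1" by (simp add: l_def)
  note l = l1 l2
  define c where "c j = g j powr l" for j
  have c0: "\<And>j. c j \<ge> 0" by (simp add: c_def)
  have "c = (\<lambda>j. g j powr (1/\<tau>))" by (simp add: c_def l_def fun_eq_iff)
  then have "c summable_on UNIV" using sg by simp
  then have sc: "summable c" using summable_on_UNIV_nonneg_real_iff[of c] c0 by simp
  define f where "f k = Ca powr l * (M powr l) ^ k * fact k powr (a * l)" for k
  have f0: "\<And>k. f k \<ge> 0" by (simp add: f_def)
  have sf: "summable (\<lambda>k. f k * (suminf c) ^ k / fact k)"
  proof -
    have "summable (\<lambda>k. Ca powr l * ((M powr l * suminf c) ^ k * fact k powr (a * l - 1)))"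
      using l suminf_nonneg[OF sc] c0
      by (intro summable_mult summable_fact_powr) auto
    moreover have "Ca powr l * ((M powr l * suminf c) ^ k * fact k powr (a * l - 1))
        = f k * (suminf c) ^ k / fact k" for k
      by (simp add: f_def powr_diff power_mult_distrib)
    ultimately show ?thesis by simp
  qed
  have S: "(\<lambda>u. f (card u) * (\<Prod>j\<in>u. c j)) summable_on U_inf"
    by (rule summable_pod[OF c0 f0 sc sf])
  show ?thesis
  proof (rule summable_on_comparison_test[OF S])
    fix u assume "u \<in> U_inf"
    have "(M ^ card u * pod_weights G g u) powr (1/\<tau>)
        = (M powr l) ^ card u * G (card u) powr l * (\<Prod>j\<in>u. c j)"
      unfolding pod_weights_def l_def c_def
      using M by (simp add: powr_mult prod_powr_distrib power_powr_pos)
    also have "\<dots> \<le> (M powr l) ^ card u * (Ca * fact (card u) powr a) powr l * (\<Prod>j\<in>u. c j)"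
      using G0 GB l c0 by (intro mult_right_mono mult_left_mono powr_mono2 prod_nonneg) auto
    also have "\<dots> = f (card u) * (\<Prod>j\<in>u. c j)"
      by (simp add: f_def powr_mult powr_powr)
    finally show "(M ^ card u * pod_weights G g u) powr (1/\<tau>) \<le> f (card u) * (\<Prod>j\<in>u. c j)" .
  qed simp
qed

lemma le_infsum_single:
  fixes y :: "'a \<Rightarrow> real"
  assumes "y summable_on A" "\<And>x. x \<in> A \<Longrightarrow> y x \<ge> 0" "x \<in> A"
  shows "y x \<le> infsum y A"
proof -
  have "infsum y {x} \<le> infsum y A"
    using assms by (intro infsum_mono_neutral) auto
  then show ?thesis by simp
qed

lemma powr_summable_imp_summable:
  fixes y :: "'a \<Rightarrow> real"
  assumes y0: "\<And>x. x \<in> A \<Longrightarrow> y x \<ge> 0" and l: "0 < l" "l \<le> 1"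
    and S: "(\<lambda>x. y x powr l) summable_on A"
  shows "y summable_on A"
proof -
  define Q where "Q = infsum (\<lambda>x. y x powr l) A"
  define K where "K = Q powr ((1 - l) / l)"
  have S2: "(\<lambda>x. K * y x powr l) summable_on A" by (rule summable_on_cmult_right[OF S])
  show ?thesis
  proof (rule summable_on_comparison_test[OF S2])
    fix x assume x: "x \<in> A"
    have Qx: "y x powr l \<le> Q" unfolding Q_def
      by (rule le_infsum_single[OF S _ x]) simp
    have e1: "y x = y x powr l * y x powr (1 - l)"
      using y0[OF x] by (simp add: powr_add[symmetric])
    have e2: "y x powr (1 - l) = (y x powr l) powr ((1 - l) / l)"
      using l by (simp add: powr_powr)
    have le: "(y x powr l) powr ((1 - l) / l) \<le> K" unfolding K_def
      using l Qx by (intro powr_mono2) auto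
    have "y x powr l * (y x powr l) powr ((1 - l) / l) \<le> y x powr l * K"
      by (rule mult_left_mono[OF le]) simp
    moreover have "y x = y x powr l * (y x powr l) powr ((1 - l) / l)"
      by (subst e2[symmetric], rule e1)
    ultimately have "y x \<le> y x powr l * K" by simp
    then show "y x \<le> K * y x powr l" by (simp add: mult.commute)
  qed (use y0 in auto)
qed

lemma decay_upper:
  fixes y :: "nat set \<Rightarrow> real" and g :: "nat \<Rightarrow> real"
  assumes y0: "\<And>u. y u \<ge> 0" and g0: "\<And>j. g j \<ge> 0" and k: "\<kappa> > 0"
    and yg: "\<And>j. \<kappa> * g j \<le> y {j}"
  shows "decay U_inf y \<le> decay UNIV g"
  unfolding decay_def
proof (rule Sup_least)
  fix x assume "x \<in> insert 0 {ereal \<tau> |\<tau>. 0 < \<tau> \<and> (\<lambda>v. y v powr (1 / \<tau>)) summable_on U_inf}"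
  then show "x \<le> Sup (insert 0 {ereal \<tau> |\<tau>. 0 < \<tau> \<and> (\<lambda>v. g v powr (1 / \<tau>)) summable_on UNIV})"
  proof
    assume "x = 0" then show ?thesis by (intro Sup_upper) auto
  next
    assume "x \<in> {ereal \<tau> |\<tau>. 0 < \<tau> \<and> (\<lambda>v. y v powr (1 / \<tau>)) summable_on U_inf}"
    then obtain \<tau> where t: "x = ereal \<tau>" "\<tau> > 0" and S: "(\<lambda>v. y v powr (1 / \<tau>)) summable_on U_inf"
      by auto
    have "(\<lambda>v. y v powr (1 / \<tau>)) summable_on ((\<lambda>j. {j}) ` UNIV)"
      by (rule summable_on_subset[OF S]) (auto simp: U_inf_def)
    then have S1: "(\<lambda>j. y {j} powr (1 / \<tau>)) summable_on UNIV"
      by (subst (asm) summable_on_reindex) (auto simp: o_def)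
    have "(\<lambda>j. g j powr (1 / \<tau>)) summable_on UNIV"
    proof (rule summable_on_comparison_test[OF summable_on_cmult_right[OF S1, of "inverse (\<kappa> powr (1/\<tau>))"]])
      fix j :: nat
      have "g j powr (1/\<tau>) \<le> (y {j} / \<kappa>) powr (1/\<tau>)"
        using yg[of j] k g0[of j] t by (intro powr_mono2) (auto simp: field_simps)
      also have "\<dots> = inverse (\<kappa> powr (1/\<tau>)) * y {j} powr (1/\<tau>)"
        by (simp add: powr_divide field_simps)
      finally show "g j powr (1/\<tau>) \<le> inverse (\<kappa> powr (1/\<tau>)) * y {j} powr (1/\<tau>)" .
    qed simp
    then show ?thesis using t by (intro Sup_upper) auto
  qed
qed

lemma decay_lower:
  fixes y :: "nat set \<Rightarrow> real" and g :: "nat \<Rightarrow> real"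
  assumes g0: "\<And>j. g j \<ge> 0" and a: "a > 0" and sg: "summable g" and da: "decay UNIV g > ereal a"
    and H: "\<And>\<tau>. \<tau> \<ge> 1 \<Longrightarrow> \<tau> > a \<Longrightarrow> (\<lambda>j. g j powr (1/\<tau>)) summable_on UNIV
               \<Longrightarrow> (\<lambda>u. y u powr (1/\<tau>)) summable_on U_inf"
  shows "decay UNIV g \<le> decay U_inf y"
proof -
  have up: "ereal \<tau> \<le> decay U_inf y" if "\<tau> \<ge> 1" "\<tau> > a" "(\<lambda>j. g j powr (1/\<tau>)) summable_on UNIV" for \<tau>
    unfolding decay_def using H[OF that] that by (intro Sup_upper) auto
  have g1: "(\<lambda>j. g j powr (1/1)) summable_on UNIV"
    using sg g0 summable_on_UNIV_nonneg_real_iff[of g] by simp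
  have "decay UNIV g \<le> max (decay U_inf y) (ereal a)"
    unfolding decay_def[of UNIV g]
  proof (rule Sup_least)
    fix x assume "x \<in> insert 0 {ereal \<tau> |\<tau>. 0 < \<tau> \<and> (\<lambda>v. g v powr (1 / \<tau>)) summable_on UNIV}"
    then show "x \<le> max (decay U_inf y) (ereal a)"
    proof
      assume "x = 0"
      moreover have "0 \<le> decay U_inf y" unfolding decay_def by (intro Sup_upper) auto
      ultimately show ?thesis using a by (simp add: max_def)
    next
      assume "x \<in> {ereal \<tau> |\<tau>. 0 < \<tau> \<and> (\<lambda>v. g v powr (1 / \<tau>)) summable_on UNIV}"
      then obtain \<tau> where t: "x = ereal \<tau>" "\<tau> > 0" and S: "(\<lambda>v. g v powr (1 / \<tau>)) summable_on UNIV"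
        by auto
      show ?thesis
      proof (cases "\<tau> \<le> a")
        case True then show ?thesis using t by (simp add: le_max_iff_disj)
      next
        case False
        show ?thesis
        proof (cases "\<tau> \<ge> 1")
          case True then show ?thesis using up[OF True _ S] False t by (simp add: le_max_iff_disj)
        next
          case F2: False
          have "ereal 1 \<le> decay U_inf y" using up[of 1] g1 False F2 by simp
          moreover have "ereal \<tau> \<le> ereal 1" using F2 by simp
          ultimately show ?thesis using t by (metis order.trans max.coboundedI1)
        qed
      qed
    qed
  qed
  then show ?thesis using da by (auto simp: max_def split: if_splits)
qed



lemma fact_add_bound: "(fact (m + n) :: real) \<le> 2 ^ (m + n) * fact m * fact n"
proof -
  have e: "fact m * fact n * (m + n choose m) = fact (m + n)"
    using binomial_fact_lemma[of m "m + n"] by simp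
  have "real (fact (m + n)) \<le> real (fact m * fact n * 2 ^ (m + n))"
    unfolding e[symmetric] of_nat_le_iff
    by (intro mult_left_mono binomial_le_pow2) auto
  then show ?thesis by (simp add: mult_ac)
qed

lemma fact_add_powr:
  fixes a :: real assumes a: "a \<ge> 0"
  shows "(fact (m + n) :: real) powr a \<le> (2 powr a) ^ (m + n) * fact m powr a * fact n powr a"
proof -
  have "(fact (m + n) :: real) powr a \<le> ((2::real) ^ (m + n) * fact m * fact n) powr a"
    using a by (intro powr_mono2 fact_add_bound) auto
  also have "\<dots> = ((2::real) ^ (m + n)) powr a * fact m powr a * fact n powr a"
    by (simp only: powr_mult)
  also have "((2::real) ^ (m + n)) powr a = (2 powr a) ^ (m + n)"
    by (rule power_powr_pos) simp
  finally show ?thesis .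
qed

lemma pointwise_split:
  fixes g Gam :: "nat \<Rightarrow> real" and C Ca a :: real
  assumes g0: "\<And>j. g j \<ge> 0" and G0: "\<And>k. Gam k \<ge> 0" and a: "a \<ge> 0" and Ca: "Ca > 0"
    and GB: "\<And>k. Gam k \<le> Ca * fact k powr a"
    and uv: "u \<subseteq> v" and fv: "finite v"
  shows "(C^2) ^ card v * pod_weights Gam g v \<le>
    Ca * ((C^2 * 2 powr a) ^ card u * pod_weights (\<lambda>k. fact k powr a) g u)
       * ((C^2 * 2 powr a) ^ card (v - u) * pod_weights (\<lambda>k. fact k powr a) g (v - u))"
proof -
  define m where "m = card u"
  define n where "n = card (v - u)"
  have fu: "finite u" using uv fv finite_subset by blast
  have cv: "card v = m + n" unfolding m_def n_def
    using card_Diff_subset[OF fu uv] card_mono[OF fv uv] by simp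
  have pv: "(\<Prod>j\<in>v. g j) = (\<Prod>j\<in>u. g j) * (\<Prod>j\<in>v-u. g j)"
    using prod.subset_diff[OF uv fv, of g] by (simp add: mult.commute)
  define X where "X = (C^2) ^ (m + n) * ((\<Prod>j\<in>u. g j) * (\<Prod>j\<in>v-u. g j))"
  have X0: "X \<ge> 0" unfolding X_def using g0 by (intro mult_nonneg_nonneg prod_nonneg) auto
  have "(C^2) ^ card v * pod_weights Gam g v = X * Gam (m + n)"
    unfolding pod_weights_def X_def cv pv by (simp add: mult_ac)
  also have "\<dots> \<le> X * (Ca * fact (m + n) powr a)"
    by (rule mult_left_mono[OF GB X0])
  also have "\<dots> \<le> X * (Ca * ((2 powr a) ^ (m + n) * fact m powr a * fact n powr a))"
    using X0 Ca fact_add_powr[OF a, of m n] by (intro mult_left_mono) auto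
  also have "\<dots> = Ca * ((C^2 * 2 powr a) ^ m * pod_weights (\<lambda>k. fact k powr a) g u)
       * ((C^2 * 2 powr a) ^ n * pod_weights (\<lambda>k. fact k powr a) g (v - u))"
    unfolding X_def pod_weights_def m_def n_def by (simp add: power_add power_mult_distrib mult_ac)
  finally show ?thesis unfolding m_def n_def .
qed

theorem mainTheorem10:
  fixes C a Ca :: real and g Gam :: "nat \<Rightarrow> real"
  assumes "C > 0"
    and "antimono g" and "\<And>j. g j \<ge> 0"
    and "\<And>k. Gam k \<ge> 0"
    and "a > 0" and "Ca > 0" and "\<And>k. Gam k \<le> Ca * (fact k) powr a"
    and "Gam 1 > 0"
    and "decay UNIV g > ereal a"
    and "summable g"
  shows "pod_weights Gam g \<in> S_inf C
    \<and> decay U_inf (T_up C (pod_weights Gam g)) = decay U_inf (pod_weights Gam g)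
    \<and> decay U_inf (pod_weights Gam g) = decay UNIV g"
proof -
  note C = assms(1) and g0 = assms(3) and G0 = assms(4) and a = assms(5) and Ca = assms(6)
    and GB = assms(7) and G1 = assms(8) and da = assms(9) and sg = assms(10)
  define \<gamma> where "\<gamma> = pod_weights Gam g"
  define ys where "ys u = (C^2) ^ card u * \<gamma> u" for u
  have \<gamma>0: "\<gamma> u \<ge> 0" for u unfolding \<gamma>_def pod_weights_def using G0 g0
    by (intro mult_nonneg_nonneg prod_nonneg) auto
  have ys0: "ys u \<ge> 0" for u unfolding ys_def using \<gamma>0 by simp
  have g1: "(\<lambda>j. g j powr (1/1)) summable_on UNIV"
    using sg g0 summable_on_UNIV_nonneg_real_iff[of g] by simp
  obtain \<tau>0 where t0: "\<tau>0 \<ge> 1" "\<tau>0 > a" "(\<lambda>j. g j powr (1/\<tau>0)) summable_on UNIV"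
  proof (cases "a < 1")
    case True then show ?thesis using that[of 1] g1 by simp
  next
    case False
    have "\<exists>x\<in>insert 0 {ereal \<tau> |\<tau>. 0 < \<tau> \<and> (\<lambda>v. g v powr (1 / \<tau>)) summable_on UNIV}. ereal a < x"
      using da unfolding decay_def by (simp only: less_Sup_iff)
    then obtain x where x1: "x \<in> insert 0 {ereal \<tau> |\<tau>. 0 < \<tau> \<and> (\<lambda>v. g v powr (1 / \<tau>)) summable_on UNIV}"
      and x2: "ereal a < x" by blast
    have "x \<noteq> 0" using a x2 by auto
    then have "x \<in> {ereal \<tau> |\<tau>. 0 < \<tau> \<and> (\<lambda>v. g v powr (1 / \<tau>)) summable_on UNIV}" using x1 by blast
    then obtain \<tau> where tt: "x = ereal \<tau>" "(\<lambda>v. g v powr (1 / \<tau>)) summable_on UNIV" by blast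
    have "\<tau> > a" using x2 tt by simp
    then show ?thesis using that[of \<tau>] tt False by simp
  qed
  have C2: "C^2 > 0" using C by simp
  have l0: "0 < 1/\<tau>0" "1/\<tau>0 \<le> 1" using t0 by auto
  have a0: "a \<ge> 0" using a by simp
  have ys_pw: "ys u = (C^2) ^ card u * pod_weights Gam g u" for u by (simp add: ys_def \<gamma>_def)
  have "(\<lambda>u. ys u powr (1/\<tau>0)) summable_on U_inf"
    unfolding ys_pw using key[OF g0 G0 a Ca GB C2 t0(2) t0(3)] by simp
  from powr_summable_imp_summable[OF _ l0(1) l0(2) this]
  have sys: "ys summable_on U_inf" using ys0 by blast
  have mem: "\<gamma> \<in> S_inf C"
  proof -
    have "ys = (\<lambda>v. C ^ (2 * card v) * \<gamma> v)" by (simp add: ys_def fun_eq_iff power_mult)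
    then show ?thesis unfolding S_inf_def using sys by simp
  qed
  have d\<gamma>: "decay U_inf \<gamma> = decay UNIV g"
  proof (rule antisym)
    show "decay U_inf \<gamma> \<le> decay UNIV g"
      by (rule decay_upper[OF \<gamma>0 g0 G1]) (simp add: \<gamma>_def pod_weights_def)
    show "decay UNIV g \<le> decay U_inf \<gamma>"
    proof (rule decay_lower[OF g0 a sg da])
      fix \<tau> :: real assume t: "\<tau> \<ge> 1" "\<tau> > a" "(\<lambda>j. g j powr (1/\<tau>)) summable_on UNIV"
      show "(\<lambda>u. \<gamma> u powr (1/\<tau>)) summable_on U_inf"
        using key[OF g0 G0 a Ca GB zero_less_one t(2) t(3)] by (simp add: \<gamma>_def)
    qed
  qed
  define T where "T = T_up C \<gamma>"
  define V where "V u = {v \<in> U_inf. u \<subseteq> v}" for u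
  have T_eq: "T u = infsum ys (V u)" for u
    unfolding T_def T_up_def V_def ys_def by (simp add: power_mult)
  have sysV: "ys summable_on V u" for u
    by (rule summable_on_subset[OF sys]) (auto simp: V_def)
  have T0: "T u \<ge> 0" for u unfolding T_eq using ys0 by (intro infsum_nonneg) auto
  define M' where "M' = C^2 * 2 powr a"
  have M': "M' > 0" using C by (simp add: M'_def)
  define G' where "G' k = fact k powr a" for k :: nat
  have G'0: "G' k \<ge> 0" for k by (simp add: G'_def)
  have G'B: "G' k \<le> 1 * fact k powr a" for k by (simp add: G'_def)
  define P where "P u = M' ^ card u * pod_weights G' g u" for u
  have P0: "P u \<ge> 0" for u unfolding P_def pod_weights_def using G'0 g0 M'
    by (intro mult_nonneg_nonneg prod_nonneg) auto
  have "(\<lambda>u. P u powr (1/\<tau>0)) summable_on U_inf"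
    unfolding P_def by (rule key[OF g0 G'0 a zero_less_one G'B M' t0(2) t0(3)])
  from powr_summable_imp_summable[OF _ l0(1) l0(2) this]
  have sP: "P summable_on U_inf" using P0 by blast
  define Z where "Z = infsum P U_inf"
  have Tb: "T u \<le> Ca * Z * P u" if u: "u \<in> U_inf" for u
  proof -
    have inj: "inj_on (\<lambda>v. v - u) (V u)"
    proof (rule inj_onI)
      fix v w assume "v \<in> V u" "w \<in> V u" "v - u = w - u"
      then show "v = w" unfolding V_def by blast
    qed
    have img: "(\<lambda>v. v - u) ` V u \<subseteq> U_inf" by (auto simp: V_def U_inf_def)
    have sPi: "P summable_on ((\<lambda>v. v - u) ` V u)" by (rule summable_on_subset[OF sP img])
    then have sPV: "(\<lambda>v. P (v - u)) summable_on V u"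
      using summable_on_reindex[OF inj, of P] by (simp add: o_def)
    have "T u = infsum ys (V u)" by (rule T_eq)
    also have "\<dots> \<le> infsum (\<lambda>v. Ca * P u * P (v - u)) (V u)"
    proof (rule infsum_mono[OF sysV])
      show "(\<lambda>v. Ca * P u * P (v - u)) summable_on V u"
        by (rule summable_on_cmult_right[OF sPV])
      fix v assume "v \<in> V u"
      then have "u \<subseteq> v" "finite v" by (auto simp: V_def U_inf_def)
      then have pw: "(C^2) ^ card v * pod_weights Gam g v \<le>
        Ca * ((C^2 * 2 powr a) ^ card u * pod_weights (\<lambda>k. fact k powr a) g u)
         * ((C^2 * 2 powr a) ^ card (v - u) * pod_weights (\<lambda>k. fact k powr a) g (v - u))"
        using g0 G0 a0 Ca GB by (intro pointwise_split) auto
      have "G' = (\<lambda>k. fact k powr a)" by (simp add: G'_def fun_eq_iff)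
      then show "ys v \<le> Ca * P u * P (v - u)"
        using pw by (simp add: ys_def \<gamma>_def P_def M'_def mult.assoc)
    qed
    also have "\<dots> = Ca * P u * infsum (\<lambda>v. P (v - u)) (V u)"
      by (rule infsum_cmult_right) (use sPV in simp)
    finally have A1: "T u \<le> Ca * P u * infsum (\<lambda>v. P (v - u)) (V u)" .
    have "infsum (\<lambda>v. P (v - u)) (V u) = infsum P ((\<lambda>v. v - u) ` V u)"
      using infsum_reindex[OF inj, of P] by (simp add: o_def)
    also have "\<dots> \<le> Z" unfolding Z_def
      using img by (intro infsum_mono_neutral[OF sPi sP]) (auto simp: P0)
    finally have A2: "infsum (\<lambda>v. P (v - u)) (V u) \<le> Z" .
    have "Ca * P u * infsum (\<lambda>v. P (v - u)) (V u) \<le> Ca * P u * Z"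
      using A2 Ca P0 by (intro mult_left_mono) auto
    with A1 show ?thesis by (simp add: mult_ac)
  qed
  have dT: "decay U_inf T = decay UNIV g"
  proof (rule antisym)
    show "decay U_inf T \<le> decay UNIV g"
    proof (rule decay_upper[OF T0 g0])
      show "C^2 * Gam 1 > 0" using C G1 by simp
      fix j :: nat
      have "{j} \<in> V {j}" by (simp add: V_def U_inf_def)
      then have "ys {j} \<le> T {j}" unfolding T_eq using sysV ys0
        by (intro le_infsum_single) auto
      then show "C^2 * Gam 1 * g j \<le> T {j}"
        by (simp add: ys_def \<gamma>_def pod_weights_def)
    qed
    show "decay UNIV g \<le> decay U_inf T"
    proof (rule decay_lower[OF g0 a sg da])
      fix \<tau> :: real assume t: "\<tau> \<ge> 1" "\<tau> > a" "(\<lambda>j. g j powr (1/\<tau>)) summable_on UNIV"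
      have S: "(\<lambda>u. P u powr (1/\<tau>)) summable_on U_inf"
        unfolding P_def by (rule key[OF g0 G'0 a zero_less_one G'B M' t(2) t(3)])
      show "(\<lambda>u. T u powr (1/\<tau>)) summable_on U_inf"
      proof (rule summable_on_comparison_test[OF summable_on_cmult_right[OF S, of "(Ca * Z) powr (1/\<tau>)"]])
        fix u assume u: "u \<in> U_inf"
        have "T u powr (1/\<tau>) \<le> (Ca * Z * P u) powr (1/\<tau>)"
          using Tb[OF u] T0 t by (intro powr_mono2) auto
        also have "\<dots> = (Ca * Z) powr (1/\<tau>) * P u powr (1/\<tau>)" by (simp add: powr_mult)
        finally show "T u powr (1/\<tau>) \<le> (Ca * Z) powr (1/\<tau>) * P u powr (1/\<tau>)" .
      qed simp
    qed
  qed
  show ?thesis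
    using mem d\<gamma> dT unfolding \<gamma>_def T_def by simp
qed

end
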